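(* Let $N$ be a Poisson random measure on $\mathcal W=[0,1]\times\mathbb R^+\times\mathcal X$ with mean intensity $\nu(du,ds,dx)=\rho(du|s)\Lambda_0(ds,dx)$ and let $S(t-)=\exp\big(-\int I\{s<t\}[-\log(1-u)]N(du,ds,dx)\big)$. Let $t_1>t_2>\dots>t_k>0$ be fixed and $m_1,\dots,m_k$ positive integers, with $r_0=0$ and $r_j=\sum_{l=1}^jm_l$. Then $$\mathbb E\Big[\prod_{j=1}^{k}S(t_j-)^{m_j}\,\Big|\,\nu\Big]=\prod_{j=1}^{k}\exp\Big(-\int_0^{t_j}\psi_{m_j,r_{j-1}}(s)\Lambda_0(ds)\Big).$$ In particular, when $k=n$ and all $m_j=1$ (no ties), this equals $\prod_{j=1}^n\exp\big(-\int_0^{t_j}\psi_{1,j-1}(s)\Lambda_0(ds)\big)$.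
   Context: $\mathcal X$ is a Polish space; $\Lambda_0(ds,dx)$ is a hazard measure on $\mathbb R^+\times\mathcal X$ (hazard of a probability measure $F_0$, i.e. $\Lambda_0(ds,dx)=F_0(ds,dx)/S_0(s-)$ with $S_0(s)=F_0((s,\infty)\times\mathcal X)$), assumed without atoms in $s$, and $\Lambda_0(ds)=\Lambda_0(ds,\mathcal X)$. For each $s$, $\rho(du|s)$ is a Lévy measure on $[0,1]$. For integers $i,k\ge0$, $\psi_{i,k}(s)=\int_0^1(1-(1-u)^i)(1-u)^k\rho(du|s)$. *)

theory Defs
  imports "HOL-Probability.Probability"
begin

text \<open>State space W = [0,1] x R+ x X of the Poisson random measure; points are (u, s, x).\<close>
definition Wspace :: "(real \<times> real \<times> 'x::polish_space) measure" where
  "Wspace = restrict_space borel ({0..1} \<times> {0..} \<times> UNIV)"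

text \<open>Levy measure on [0,1]: no mass at 0 and integrates u (i.e. min(1,u)).\<close>
definition levy_measure_01 :: "real measure \<Rightarrow> bool" where
  "levy_measure_01 \<mu> \<longleftrightarrow> sets \<mu> = sets (restrict_space borel {0..1::real})
     \<and> emeasure \<mu> {0} = 0 \<and> (\<integral>\<^sup>+ u. ennreal u \<partial>\<mu>) < \<infinity>"

text \<open>Hazard measure of a probability measure F0 on R+ x X:
  Lambda0(ds,dx) = F0(ds,dx) / S0(s-), with S0(s-) = F0([s,oo) x X).\<close>
definition hazard_measure :: "(real \<times> 'x::polish_space) measure \<Rightarrow> (real \<times> 'x) measure" where
  "hazard_measure F0 = density F0 (\<lambda>(s,x). inverse (emeasure F0 ({s..} \<times> UNIV)))"

definition marginal_s :: "(real \<times> 'x::polish_space) measure \<Rightarrow> real measure" where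
  "marginal_s L = distr L borel fst"

definition psi :: "(real \<Rightarrow> real measure) \<Rightarrow> nat \<Rightarrow> nat \<Rightarrow> real \<Rightarrow> ennreal" where
  "psi \<rho> i k s = (\<integral>\<^sup>+ u. ennreal ((1 - (1 - u) ^ i) * (1 - u) ^ k) \<partial>(\<rho> s))"

definition exp_neg :: "ennreal \<Rightarrow> real" where
  "exp_neg a = (if a = \<infinity> then 0 else exp (- enn2real a))"

definition neglog1m :: "real \<Rightarrow> ennreal" where
  "neglog1m u = (if u < 1 then ennreal (- ln (1 - u)) else \<infinity>)"

definition surv_minus :: "(real \<times> real \<times> 'x) measure \<Rightarrow> real \<Rightarrow> real" where
  "surv_minus Nw t = exp_neg (\<integral>\<^sup>+ w. indicator {w. fst (snd w) < t} w * neglog1m (fst w) \<partial>Nw)"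

definition poisson_random_measure ::
  "'o measure \<Rightarrow> 'w measure \<Rightarrow> 'w measure \<Rightarrow> ('o \<Rightarrow> 'w measure) \<Rightarrow> bool" where
  "poisson_random_measure P W \<nu> N \<longleftrightarrow>
     prob_space P \<and> sets \<nu> = sets W \<and>
     (\<forall>\<omega>\<in>space P. sets (N \<omega>) = sets W) \<and>
     (\<forall>A\<in>sets W. (\<lambda>\<omega>. emeasure (N \<omega>) A) \<in> borel_measurable P) \<and>
     (\<forall>A\<in>sets W. emeasure \<nu> A < \<infinity> \<longrightarrow>
        (\<forall>n::nat. measure P {\<omega>\<in>space P. emeasure (N \<omega>) A = of_nat n}
            = exp (- enn2real (emeasure \<nu> A)) * enn2real (emeasure \<nu> A) ^ n / fact n)) \<and>
     (\<forall>A\<in>sets W. emeasure \<nu> A = \<infinity> \<longrightarrow> (AE \<omega> in P. emeasure (N \<omega>) A = \<infinity>)) \<and>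
     (\<forall>(A :: nat \<Rightarrow> 'w set) I. finite I \<longrightarrow> A ` I \<subseteq> sets W \<longrightarrow> disjoint_family_on A I \<longrightarrow>
        prob_space.indep_vars P (\<lambda>_. borel) (\<lambda>i \<omega>. emeasure (N \<omega>) (A i)) I)"

end

theory Submission
  imports Defs
begin

lemma exp_neg_nonneg[simp]: "0 \<le> exp_neg a"
  by (simp add: exp_neg_def)

lemma exp_neg_le1[simp]: "exp_neg a \<le> 1"
  by (simp add: exp_neg_def enn2real_nonneg)

lemma exp_neg_0[simp]: "exp_neg 0 = 1"
  by (simp add: exp_neg_def)

lemma exp_neg_top[simp]: "exp_neg \<infinity> = 0"
  by (simp add: exp_neg_def)

lemma exp_neg_ennreal: "0 \<le> x \<Longrightarrow> exp_neg (ennreal x) = exp (- x)"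
  by (simp add: exp_neg_def)

lemma exp_neg_add: "exp_neg (a + b) = exp_neg a * exp_neg b"
proof (cases "a = \<infinity> \<or> b = \<infinity>")
  case True then show ?thesis by (auto simp: exp_neg_def)
next
  case False
  then have "enn2real (a + b) = enn2real a + enn2real b"
    by (simp add: enn2real_plus top.not_eq_extremum)
  with False show ?thesis by (auto simp: exp_neg_def exp_add[symmetric])
qed

lemma exp_neg_sum: "exp_neg (\<Sum>i\<in>I. f i) = (\<Prod>i\<in>I. exp_neg (f i))"
  by (induction I rule: infinite_finite_induct) (auto simp: exp_neg_add)

lemma exp_neg_of_nat_mult: "exp_neg (of_nat n * a) = exp_neg a ^ n"
  by (induction n) (auto simp: exp_neg_add distrib_right)

lemma exp_neg_measurable[measurable]: "exp_neg \<in> borel_measurable borel"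
  unfolding exp_neg_def[abs_def] by measurable

lemma exp_neg_tendsto:
  assumes X: "(X \<longlongrightarrow> L) F"
  shows "((\<lambda>n. exp_neg (X n)) \<longlongrightarrow> exp_neg L) F"
proof (cases "L = \<infinity>")
  case False
  then have ev: "eventually (\<lambda>n. X n < \<infinity>) F"
    using X by (intro order_tendstoD(2)) (auto simp: top.not_eq_extremum)
  have "((\<lambda>n. exp (- enn2real (X n))) \<longlongrightarrow> exp (- enn2real L)) F"
    using X False by (intro tendsto_intros tendsto_enn2real) (auto simp: ennreal_enn2real top.not_eq_extremum)
  moreover have "eventually (\<lambda>n. exp (- enn2real (X n)) = exp_neg (X n)) F"
    by (rule eventually_mono[OF ev]) (auto simp: exp_neg_def)
  ultimately have "((\<lambda>n. exp_neg (X n)) \<longlongrightarrow> exp (- enn2real L)) F"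
    by (rule Lim_transform_eventually)
  then show ?thesis
    using False by (simp add: exp_neg_def)
next
  case True
  show ?thesis unfolding True exp_neg_top
  proof (rule tendstoI)
    fix e :: real assume e: "0 < e"
    define M where "M = max 0 (- ln (e/2))"
    have M0: "0 \<le> M" by (simp add: M_def)
    have "exp (- M) \<le> e/2"
    proof -
      have "exp (-M) \<le> exp (ln (e/2))" unfolding M_def by (intro exp_le_cancel_iff[THEN iffD2]) auto
      then show ?thesis using e by simp
    qed
    have ev: "eventually (\<lambda>n. ennreal M < X n) F"
      using X True by (intro order_tendstoD(1)) auto
    show "eventually (\<lambda>n. dist (exp_neg (X n)) 0 < e) F"
    proof (rule eventually_mono[OF ev])
      fix n assume "ennreal M < X n"
      then have "exp_neg (X n) \<le> exp (- M)"
        using M0 by (cases "X n") (auto simp: exp_neg_def ennreal_less_iff)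
      then show "dist (exp_neg (X n)) 0 < e"
        using \<open>exp (- M) \<le> e/2\<close> e by simp
    qed
  qed
qed


lemma poisson_exp_series:
  fixes l q :: real
  shows "(\<lambda>n. q ^ n * (exp (- l) * l ^ n / fact n)) sums (exp (- l) * exp (q * l))"
proof -
  have "(\<lambda>n. (q*l) ^ n /\<^sub>R fact n) sums exp (q*l)" by (rule exp_converges)
  then have "(\<lambda>n. exp (- l) * ((q*l) ^ n /\<^sub>R fact n)) sums (exp (- l) * exp (q*l))"
    by (rule sums_mult)
  then show ?thesis by (simp add: power_mult_distrib field_simps)
qed

lemma poisson_single:
  assumes PRM: "poisson_random_measure P W \<nu> N" and A: "A \<in> sets W"
  shows "(\<integral>\<omega>. exp_neg (c * emeasure (N \<omega>) A) \<partial>P) = exp_neg (ennreal (1 - exp_neg c) * emeasure \<nu> A)"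
proof -
  interpret prob_space P using PRM by (simp add: poisson_random_measure_def)
  have meas[measurable]: "(\<lambda>\<omega>. emeasure (N \<omega>) A) \<in> borel_measurable P"
    using PRM A by (simp add: poisson_random_measure_def)
  show ?thesis
  proof (cases "emeasure \<nu> A = \<infinity>")
    case True
    then have ae: "AE \<omega> in P. emeasure (N \<omega>) A = \<infinity>"
      using PRM A by (simp add: poisson_random_measure_def)
    have "(\<integral>\<omega>. exp_neg (c * emeasure (N \<omega>) A) \<partial>P) = (\<integral>\<omega>. exp_neg (c * \<infinity>) \<partial>P)"
      by (rule integral_cong_AE) (use ae in auto)
    also have "\<dots> = exp_neg (c * \<infinity>)" by (simp add: prob_space)
    also have "\<dots> = exp_neg (ennreal (1 - exp_neg c) * emeasure \<nu> A)"
    proof (cases "c = 0")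
      case True then show ?thesis by simp
    next
      case False
      have "exp_neg c < 1"
      proof (cases "c = \<infinity>")
        case False
        with \<open>c \<noteq> 0\<close> have "0 < enn2real c"
          by (simp add: enn2real_positive_iff top.not_eq_extremum zero_less_iff_neq_zero)
        then show ?thesis using False by (simp add: exp_neg_def)
      qed (simp add: exp_neg_def)
      then have "ennreal (1 - exp_neg c) \<noteq> 0" by simp
      then show ?thesis using False True by (simp add: ennreal_mult_eq_top_iff)
    qed
    finally show ?thesis .
  next
    case False
    define l where "l = enn2real (emeasure \<nu> A)"
    have l0: "0 \<le> l" by (simp add: l_def)
    have nuA: "emeasure \<nu> A = ennreal l" using False by (simp add: l_def ennreal_enn2real top.not_eq_extremum)
    define p where "p n = exp (- l) * l ^ n / fact n" for n :: nat
    have p0: "0 \<le> p n" for n using l0 by (simp add: p_def)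
    have prob_n: "measure P {\<omega>\<in>space P. emeasure (N \<omega>) A = of_nat n} = p n" for n
      using PRM A False by (simp add: poisson_random_measure_def p_def l_def top.not_eq_extremum)
    have "(\<lambda>n. \<P>(\<omega> in P. emeasure (N \<omega>) A = of_nat n)) sums \<P>(\<omega> in P. \<exists>n::nat. emeasure (N \<omega>) A = of_nat n)"
      by (rule prob_sums) auto
    moreover have "p sums 1"
    proof -
      have "p = (\<lambda>n. 1 ^ n * (exp (- l) * l ^ n / fact n))" by (simp add: p_def fun_eq_iff)
      moreover have "exp (- l) * exp (1 * l) = 1" by (simp add: exp_add[symmetric])
      ultimately show ?thesis using poisson_exp_series[of 1 l] by simp
    qed
    ultimately have "\<P>(\<omega> in P. \<exists>n::nat. emeasure (N \<omega>) A = of_nat n) = 1"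
      using prob_n sums_unique2 by auto
    then have ae: "AE \<omega> in P. \<exists>n::nat. emeasure (N \<omega>) A = of_nat n"
      by (subst prob_Collect_eq_1[symmetric]) auto
    define q where "q = exp_neg c"
    have q0: "0 \<le> q" "q \<le> 1" by (auto simp: q_def)
    have en: "exp_neg (c * of_nat n) = q ^ n" for n
      using exp_neg_of_nat_mult[of n c] by (simp add: q_def mult.commute)
    have "(\<integral>\<^sup>+\<omega>. ennreal (exp_neg (c * emeasure (N \<omega>) A)) \<partial>P)
        = (\<integral>\<^sup>+\<omega>. (\<Sum>n. ennreal (q ^ n) * indicator {\<omega>\<in>space P. emeasure (N \<omega>) A = of_nat n} \<omega>) \<partial>P)"
    proof (rule nn_integral_cong_AE)
      show "AE \<omega> in P. ennreal (exp_neg (c * emeasure (N \<omega>) A)) =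
          (\<Sum>n. ennreal (q ^ n) * indicator {\<omega>\<in>space P. emeasure (N \<omega>) A = of_nat n} \<omega>)"
        using ae
      proof (rule AE_mp[OF _ AE_I2], safe)
        fix \<omega> n assume \<omega>: "\<omega> \<in> space P" and n: "emeasure (N \<omega>) A = of_nat n"
        have "(\<lambda>i. ennreal (q ^ i) * indicator {\<omega>\<in>space P. emeasure (N \<omega>) A = of_nat i} \<omega>)
            = (\<lambda>i. if i = n then ennreal (q ^ i) else 0)"
          using \<omega> n by (auto simp: indicator_def fun_eq_iff)
        then show "ennreal (exp_neg (c * emeasure (N \<omega>) A)) =
          (\<Sum>i. ennreal (q ^ i) * indicator {\<omega>\<in>space P. emeasure (N \<omega>) A = of_nat i} \<omega>)"
          using sums_unique[OF sums_single[of n "\<lambda>i. ennreal (q ^ i)"]] n en by simp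
      qed
    qed
    also have "\<dots> = (\<Sum>n. \<integral>\<^sup>+\<omega>. ennreal (q ^ n) * indicator {\<omega>\<in>space P. emeasure (N \<omega>) A = of_nat n} \<omega> \<partial>P)"
      by (rule nn_integral_suminf) auto
    also have "\<dots> = (\<Sum>n. ennreal (q ^ n * p n))"
      by (simp add: nn_integral_cmult_indicator emeasure_eq_measure prob_n ennreal_mult q0 p0)
    also have "\<dots> = ennreal (exp (- l) * exp (q * l))"
      using poisson_exp_series[of q l] q0 p0
      by (subst suminf_ennreal2) (auto simp: p_def sums_iff l0 intro!: divide_nonneg_pos mult_nonneg_nonneg)
    finally have nn: "(\<integral>\<^sup>+\<omega>. ennreal (exp_neg (c * emeasure (N \<omega>) A)) \<partial>P) = ennreal (exp (- l) * exp (q * l))" .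
    have "(\<integral>\<omega>. exp_neg (c * emeasure (N \<omega>) A) \<partial>P) = enn2real (ennreal (exp (- l) * exp (q * l)))"
      by (subst integral_eq_nn_integral) (auto simp: nn)
    also have "\<dots> = exp (- ((1 - q) * l))"
      by (simp add: exp_add[symmetric] algebra_simps)
    also have "\<dots> = exp_neg (ennreal (1 - exp_neg c) * emeasure \<nu> A)"
      using q0 l0 by (simp add: nuA q_def ennreal_mult[symmetric] exp_neg_ennreal)
    finally show ?thesis .
  qed
qed


lemma simple_nn_integral_comp:
  assumes g: "simple_function M g" and sets: "sets M' = sets M"
  shows "(\<integral>\<^sup>+x. h (g x) \<partial>M') = (\<Sum>c\<in>g ` space M. h c * emeasure M' (g -` {c} \<inter> space M))"
proof -
  have sp: "space M' = space M" using sets by (rule sets_eq_imp_space_eq)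
  have fin: "finite (g ` space M)" using g by (simp add: simple_functionD)
  have S: "g -` {c} \<inter> space M \<in> sets M'" for c using g sets by (simp add: simple_functionD)
  have "(\<integral>\<^sup>+x. h (g x) \<partial>M') = (\<integral>\<^sup>+x. (\<Sum>c\<in>g ` space M. h c * indicator (g -` {c} \<inter> space M) x) \<partial>M')"
  proof (rule nn_integral_cong)
    fix x assume x: "x \<in> space M'"
    have "(\<Sum>c\<in>g ` space M. h c * indicator (g -` {c} \<inter> space M) x) = (\<Sum>c\<in>g ` space M. if c = g x then h c else 0)"
      using x sp by (intro sum.cong) (auto simp: indicator_def)
    also have "\<dots> = h (g x)" using fin x sp by (simp add: sum.delta')
    finally show "h (g x) = (\<Sum>c\<in>g ` space M. h c * indicator (g -` {c} \<inter> space M) x)" by simp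
  qed
  also have "\<dots> = (\<Sum>c\<in>g ` space M. \<integral>\<^sup>+x. h c * indicator (g -` {c} \<inter> space M) x \<partial>M')"
    using S by (intro nn_integral_sum) auto
  also have "\<dots> = (\<Sum>c\<in>g ` space M. h c * emeasure M' (g -` {c} \<inter> space M))"
    using S by (simp add: nn_integral_cmult_indicator)
  finally show ?thesis .
qed

lemma laplace_simple:
  assumes PRM: "poisson_random_measure P W \<nu> N" and g: "simple_function W g"
  shows "(\<lambda>\<omega>. \<integral>\<^sup>+w. g w \<partial>N \<omega>) \<in> borel_measurable P"
    and "(\<integral>\<omega>. exp_neg (\<integral>\<^sup>+w. g w \<partial>N \<omega>) \<partial>P) = exp_neg (\<integral>\<^sup>+w. ennreal (1 - exp_neg (g w)) \<partial>\<nu>)"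
proof -
  interpret prob_space P using PRM by (simp add: poisson_random_measure_def)
  define C where "C = g ` space W"
  have fin: "finite C" using g by (simp add: simple_functionD C_def)
  obtain e where e: "bij_betw e {0..<card C} C" using ex_bij_betw_nat_finite[OF fin] by blast
  define n where "n = card C"
  define B where "B i = g -` {e i} \<inter> space W" for i
  have B: "B i \<in> sets W" for i using g by (simp add: simple_functionD B_def)
  have NS: "\<And>\<omega>. \<omega> \<in> space P \<Longrightarrow> sets (N \<omega>) = sets W"
    using PRM by (simp add: poisson_random_measure_def)
  have nuS: "sets \<nu> = sets W" using PRM by (simp add: poisson_random_measure_def)
  have meas[measurable]: "(\<lambda>\<omega>. emeasure (N \<omega>) (B i)) \<in> borel_measurable P" for i
    using PRM B by (simp add: poisson_random_measure_def)
  have eqN: "(\<integral>\<^sup>+w. g w \<partial>N \<omega>) = (\<Sum>i\<in>{0..<n}. e i * emeasure (N \<omega>) (B i))" if "\<omega> \<in> space P" for \<omega>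
  proof -
    have "(\<integral>\<^sup>+w. g w \<partial>N \<omega>) = (\<Sum>c\<in>C. c * emeasure (N \<omega>) (g -` {c} \<inter> space W))"
      using simple_nn_integral_comp[OF g NS[OF that], of "\<lambda>x. x"] by (simp add: C_def)
    also have "\<dots> = (\<Sum>i\<in>{0..<n}. e i * emeasure (N \<omega>) (B i))"
      using sum.reindex_bij_betw[OF e, of "\<lambda>c. c * emeasure (N \<omega>) (g -` {c} \<inter> space W)"]
      by (simp add: B_def n_def)
    finally show ?thesis .
  qed
  show "(\<lambda>\<omega>. \<integral>\<^sup>+w. g w \<partial>N \<omega>) \<in> borel_measurable P"
    by (subst measurable_cong[OF eqN]) auto
  have "(\<lambda>i. B i) ` {0..<n} \<subseteq> sets W" using B by auto
  moreover have "disjoint_family_on B {0..<n}"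
    unfolding disjoint_family_on_def
  proof (intro ballI impI)
    fix i j assume "i \<in> {0..<n}" "j \<in> {0..<n}" "i \<noteq> j"
    then have "e i \<noteq> e j" using e by (auto simp: bij_betw_def inj_on_def n_def)
    then show "B i \<inter> B j = {}" by (auto simp: B_def)
  qed
  ultimately have ind: "indep_vars (\<lambda>_. borel) (\<lambda>i \<omega>. emeasure (N \<omega>) (B i)) {0..<n}"
    using PRM by (simp add: poisson_random_measure_def)
  have ind2: "indep_vars (\<lambda>_. borel) (\<lambda>i \<omega>. exp_neg (e i * emeasure (N \<omega>) (B i))) {0..<n}"
    by (rule indep_vars_compose2[OF ind, where Y="\<lambda>i x. exp_neg (e i * x)"]) auto
  have int: "integrable P (\<lambda>\<omega>. exp_neg (e i * emeasure (N \<omega>) (B i)))" for i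
    by (rule integrable_const_bound[where B=1]) auto
  have "(\<integral>\<omega>. exp_neg (\<integral>\<^sup>+w. g w \<partial>N \<omega>) \<partial>P) = (\<integral>\<omega>. (\<Prod>i\<in>{0..<n}. exp_neg (e i * emeasure (N \<omega>) (B i))) \<partial>P)"
    by (rule Bochner_Integration.integral_cong[OF refl]) (simp add: eqN exp_neg_sum)
  also have "\<dots> = (\<Prod>i\<in>{0..<n}. \<integral>\<omega>. exp_neg (e i * emeasure (N \<omega>) (B i)) \<partial>P)"
    using ind2 int by (intro indep_vars_lebesgue_integral) auto
  also have "\<dots> = (\<Prod>i\<in>{0..<n}. exp_neg (ennreal (1 - exp_neg (e i)) * emeasure \<nu> (B i)))"
    using poisson_single[OF PRM B] by simp
  also have "\<dots> = exp_neg (\<Sum>i\<in>{0..<n}. ennreal (1 - exp_neg (e i)) * emeasure \<nu> (B i))"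
    by (simp add: exp_neg_sum)
  also have "(\<Sum>i\<in>{0..<n}. ennreal (1 - exp_neg (e i)) * emeasure \<nu> (B i))
      = (\<Sum>c\<in>C. ennreal (1 - exp_neg c) * emeasure \<nu> (g -` {c} \<inter> space W))"
    using sum.reindex_bij_betw[OF e, of "\<lambda>c. ennreal (1 - exp_neg c) * emeasure \<nu> (g -` {c} \<inter> space W)"]
    by (simp add: B_def n_def)
  also have "\<dots> = (\<integral>\<^sup>+w. ennreal (1 - exp_neg (g w)) \<partial>\<nu>)"
    using simple_nn_integral_comp[OF g nuS, of "\<lambda>c. ennreal (1 - exp_neg c)"] by (simp add: C_def)
  finally show "(\<integral>\<omega>. exp_neg (\<integral>\<^sup>+w. g w \<partial>N \<omega>) \<partial>P) = exp_neg (\<integral>\<^sup>+w. ennreal (1 - exp_neg (g w)) \<partial>\<nu>)" .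
qed


lemma exp_neg_mono: "a \<le> b \<Longrightarrow> exp_neg b \<le> exp_neg a"
proof (cases "b = \<infinity>")
  case False
  assume ab: "a \<le> b"
  then have "a \<noteq> \<infinity>" using False by (auto simp: top_unique)
  then have "enn2real a \<le> enn2real b" using ab False by (simp add: enn2real_mono top.not_eq_extremum)
  then show ?thesis using False \<open>a \<noteq> \<infinity>\<close> by (simp add: exp_neg_def)
qed (simp add: exp_neg_def)

lemma laplace_general:
  assumes PRM: "poisson_random_measure P W \<nu> N" and g: "g \<in> borel_measurable W"
  shows "(\<lambda>\<omega>. \<integral>\<^sup>+w. g w \<partial>N \<omega>) \<in> borel_measurable P"
    and "(\<integral>\<omega>. exp_neg (\<integral>\<^sup>+w. g w \<partial>N \<omega>) \<partial>P) = exp_neg (\<integral>\<^sup>+w. ennreal (1 - exp_neg (g w)) \<partial>\<nu>)"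
proof -
  interpret prob_space P using PRM by (simp add: poisson_random_measure_def)
  obtain f where f: "\<And>i. simple_function W (f i)" "incseq f" "\<And>x. (SUP i. f i x) = g x"
    using borel_measurable_implies_simple_function_sequence'[OF g] by metis
  have fm: "f i \<in> borel_measurable W" for i using f(1) by (rule borel_measurable_simple_function)
  have NS: "\<And>\<omega>. \<omega> \<in> space P \<Longrightarrow> sets (N \<omega>) = sets W"
    using PRM by (simp add: poisson_random_measure_def)
  have nuS: "sets \<nu> = sets W" using PRM by (simp add: poisson_random_measure_def)
  have fmono: "f i x \<le> f j x" if "i \<le> j" for i j x using f(2) that by (auto simp: incseq_def le_fun_def)
  have geq: "g = (\<lambda>x. SUP i. f i x)" using f(3) by auto
  have eqN: "(\<integral>\<^sup>+w. g w \<partial>N \<omega>) = (SUP i. \<integral>\<^sup>+w. f i w \<partial>N \<omega>)" if "\<omega> \<in> space P" for \<omega>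
    unfolding geq using f(2) fm measurable_cong_sets[OF NS[OF that] refl]
    by (intro nn_integral_monotone_convergence_SUP) auto
  have mi[measurable]: "(\<lambda>\<omega>. \<integral>\<^sup>+w. f i w \<partial>N \<omega>) \<in> borel_measurable P" for i
    using laplace_simple(1)[OF PRM f(1)] .
  show gm: "(\<lambda>\<omega>. \<integral>\<^sup>+w. g w \<partial>N \<omega>) \<in> borel_measurable P"
    by (subst measurable_cong[OF eqN]) auto
  have incN: "incseq (\<lambda>i. \<integral>\<^sup>+w. f i w \<partial>N \<omega>)" for \<omega>
    by (auto simp: incseq_def intro!: nn_integral_mono fmono)
  have lim1: "(\<lambda>i. \<integral>\<omega>. exp_neg (\<integral>\<^sup>+w. f i w \<partial>N \<omega>) \<partial>P) \<longlonglongrightarrow> (\<integral>\<omega>. exp_neg (\<integral>\<^sup>+w. g w \<partial>N \<omega>) \<partial>P)"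
  proof (rule integral_dominated_convergence[where w="\<lambda>_. 1"])
    show "AE \<omega> in P. (\<lambda>i. exp_neg (\<integral>\<^sup>+w. f i w \<partial>N \<omega>)) \<longlonglongrightarrow> exp_neg (\<integral>\<^sup>+w. g w \<partial>N \<omega>)"
      by (rule AE_I2, subst eqN, assumption, rule exp_neg_tendsto, rule LIMSEQ_SUP, rule incN)
  qed (use gm in auto)
  have incf: "incseq (\<lambda>i. ennreal (1 - exp_neg (f i w)))" for w
    by (auto simp: incseq_def intro!: ennreal_leI exp_neg_mono fmono)
  have geq2: "ennreal (1 - exp_neg (g w)) = (SUP i. ennreal (1 - exp_neg (f i w)))" for w
  proof (rule LIMSEQ_unique[OF _ LIMSEQ_SUP[OF incf]])
    have "(\<lambda>i. f i w) \<longlonglongrightarrow> g w" unfolding f(3)[symmetric]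
      by (rule LIMSEQ_SUP) (auto simp: incseq_def intro!: fmono)
    then show "(\<lambda>i. ennreal (1 - exp_neg (f i w))) \<longlonglongrightarrow> ennreal (1 - exp_neg (g w))"
      by (intro tendsto_ennrealI tendsto_diff tendsto_const exp_neg_tendsto)
  qed
  have fmnu: "(\<lambda>w. ennreal (1 - exp_neg (f i w))) \<in> borel_measurable \<nu>" for i
  proof -
    have [measurable]: "f i \<in> borel_measurable W" by (rule fm)
    have "(\<lambda>w. ennreal (1 - exp_neg (f i w))) \<in> borel_measurable W" by measurable
    then show ?thesis by (subst measurable_cong_sets[OF nuS refl])
  qed
  have eqnu: "(\<integral>\<^sup>+w. ennreal (1 - exp_neg (g w)) \<partial>\<nu>) = (SUP i. \<integral>\<^sup>+w. ennreal (1 - exp_neg (f i w)) \<partial>\<nu>)"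
    unfolding geq2 using incf fmnu
    by (intro nn_integral_monotone_convergence_SUP) (auto simp: incseq_def le_fun_def)
  have lim2: "(\<lambda>i. exp_neg (\<integral>\<^sup>+w. ennreal (1 - exp_neg (f i w)) \<partial>\<nu>)) \<longlonglongrightarrow> exp_neg (\<integral>\<^sup>+w. ennreal (1 - exp_neg (g w)) \<partial>\<nu>)"
    unfolding eqnu
    by (intro exp_neg_tendsto LIMSEQ_SUP) (auto simp: incseq_def intro!: nn_integral_mono incf[THEN incseqD])
  show "(\<integral>\<omega>. exp_neg (\<integral>\<^sup>+w. g w \<partial>N \<omega>) \<partial>P) = exp_neg (\<integral>\<^sup>+w. ennreal (1 - exp_neg (g w)) \<partial>\<nu>)"
    using lim1 lim2 laplace_simple(2)[OF PRM f(1)] by (auto intro: LIMSEQ_unique)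
qed


lemma fst_borel[measurable]: "fst \<in> borel_measurable (borel :: ('a::second_countable_topology \<times> 'b::second_countable_topology) measure)"
  by (rule borel_measurable_continuous_onI) (intro continuous_intros)

lemma snd_borel[measurable]: "snd \<in> measurable (borel :: ('a::second_countable_topology \<times> 'b::second_countable_topology) measure) borel"
  by (rule borel_measurable_continuous_onI) (intro continuous_intros)

lemma times_borel:
  fixes A :: "'a::second_countable_topology set" and B :: "'b::second_countable_topology set"
  assumes "A \<in> sets borel" "B \<in> sets borel" shows "A \<times> B \<in> sets borel"
proof -
  have "A \<times> B \<in> sets (borel \<Otimes>\<^sub>M borel)" using assms by (rule pair_measureI)
  then show ?thesis unfolding borel_prod .
qed

lemma space_Wspace: "space Wspace = {0..1} \<times> {0..} \<times> UNIV"
  by (simp add: Wspace_def space_restrict_space)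

lemma S_borel: "({0..1::real} \<times> {0::real..} \<times> (UNIV::'x::polish_space set)) \<in> sets borel"
  by (intro times_borel) auto

lemma sets_Wspace_iff: "A \<in> sets (Wspace :: (real \<times> real \<times> 'x::polish_space) measure) \<longleftrightarrow> A \<subseteq> {0..1} \<times> {0..} \<times> UNIV \<and> A \<in> sets borel"
  unfolding Wspace_def using S_borel by (subst sets_restrict_space_iff) auto

lemma fst_Wspace[measurable]: "fst \<in> measurable (Wspace :: (real \<times> real \<times> 'x::polish_space) measure) (restrict_space borel {0..1})"
  unfolding Wspace_def
  by (intro measurable_restrict_space2 measurable_restrict_space1) (auto simp: space_restrict_space)

lemma fst_Wspace'[measurable]: "fst \<in> borel_measurable (Wspace :: (real \<times> real \<times> 'x::polish_space) measure)"
  unfolding Wspace_def by (intro measurable_restrict_space1) measurable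

lemma s_Wspace[measurable]: "(\<lambda>w. fst (snd w)) \<in> borel_measurable (Wspace :: (real \<times> real \<times> 'x::polish_space) measure)"
  unfolding Wspace_def by (intro measurable_restrict_space1) measurable

lemma neglog1m_measurable[measurable]: "neglog1m \<in> borel_measurable borel"
  unfolding neglog1m_def[abs_def] by measurable


lemma nu_fun:
  fixes \<Lambda>0 :: "(real \<times> 'x::polish_space) measure" and \<rho> :: "real \<Rightarrow> real measure"
    and \<nu> :: "(real \<times> real \<times> 'x) measure"
  assumes rho_sets: "\<And>s. sets (\<rho> s) = sets (restrict_space borel {0..1::real})"
    and kernel: "\<And>A. A \<in> sets (restrict_space borel {0..1::real}) \<Longrightarrow>
                    (\<lambda>s. emeasure (\<rho> s) A) \<in> borel_measurable borel"
    and L_sets: "sets \<Lambda>0 = sets borel"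
    and nu_sets: "sets \<nu> = sets (Wspace :: (real \<times> real \<times> 'x) measure)"
    and nu_def: "\<And>A. A \<in> sets (Wspace :: (real \<times> real \<times> 'x) measure) \<Longrightarrow>
        emeasure \<nu> A = (\<integral>\<^sup>+ sx. (\<integral>\<^sup>+ u. indicator A (u, fst sx, snd sx) \<partial>(\<rho> (fst sx))) \<partial>\<Lambda>0)"
    and H: "H \<in> borel_measurable (restrict_space borel {0..1::real})"
  shows "(\<lambda>s. \<integral>\<^sup>+u. H u \<partial>\<rho> s) \<in> borel_measurable borel \<and>
    (\<integral>\<^sup>+w. indicator {w. fst (snd w) < t} w * H (fst w) \<partial>\<nu>)
      = (\<integral>\<^sup>+sx. indicator {0..<t} (fst sx) * (\<integral>\<^sup>+u. H u \<partial>\<rho> (fst sx)) \<partial>\<Lambda>0)"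
proof -
  let ?M0 = "restrict_space borel {0..1::real}"
  have sp_rho: "space (\<rho> s) = {0..1}" for s
    using sets_eq_imp_space_eq[OF rho_sets[of s]] by (simp add: space_restrict_space)
  have sp_nu: "space \<nu> = {0..1} \<times> {0..} \<times> UNIV"
    using sets_eq_imp_space_eq[OF nu_sets] by (simp add: space_Wspace)
  have mnu: "(\<lambda>w. indicator {w. fst (snd w) < t} w * F (fst w)) \<in> borel_measurable \<nu>"
    if F: "F \<in> borel_measurable ?M0" for F :: "real \<Rightarrow> ennreal"
  proof -
    have [measurable]: "(\<lambda>w. F (fst w)) \<in> borel_measurable (Wspace :: (real \<times> real \<times> 'x) measure)"
      using measurable_compose[OF fst_Wspace F] by simp
    have "(\<lambda>w. indicator {w. fst (snd w) < t} w * F (fst w)) \<in> borel_measurable (Wspace :: (real \<times> real \<times> 'x) measure)"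
      by measurable
    then show ?thesis by (subst measurable_cong_sets[OF nu_sets refl])
  qed
  have mL: "(\<lambda>sx. indicator {0..<t} (fst sx) * G (fst sx)) \<in> borel_measurable \<Lambda>0"
    if G[measurable]: "G \<in> borel_measurable borel" for G :: "real \<Rightarrow> ennreal"
  proof -
    have "(\<lambda>sx. indicator {0..<t} (fst sx) * G (fst sx)) \<in> borel_measurable (borel :: (real \<times> 'x) measure)"
      by measurable
    then show ?thesis by (subst measurable_cong_sets[OF L_sets refl])
  qed
  have mrho: "F \<in> borel_measurable (\<rho> s)" if "F \<in> borel_measurable ?M0" for F :: "real \<Rightarrow> ennreal" and s
    using that by (subst measurable_cong_sets[OF rho_sets refl])
  from H show ?thesis
  proof (induction H rule: borel_measurable_induct)
    case (cong f g)
    have eq: "(\<integral>\<^sup>+u. f u \<partial>\<rho> s) = (\<integral>\<^sup>+u. g u \<partial>\<rho> s)" for s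
      using cong(3) by (intro nn_integral_cong) (auto simp: sp_rho space_restrict_space)
    have eq2: "(\<integral>\<^sup>+w. indicator {w. fst (snd w) < t} w * f (fst w) \<partial>\<nu>) = (\<integral>\<^sup>+w. indicator {w. fst (snd w) < t} w * g (fst w) \<partial>\<nu>)"
      using cong(3) by (intro nn_integral_cong) (auto simp: sp_nu space_restrict_space)
    show ?case using cong(4) by (simp add: eq eq2)
  next
    case (set A)
    have A01: "A \<subseteq> {0..1}" and Ab: "A \<in> sets borel"
      using set sets_restrict_space_iff[of "{0..1::real}" borel A] by auto
    define D where "D = A \<times> ({0..<t} \<times> (UNIV :: 'x set))"
    have D: "D \<in> sets (Wspace :: (real \<times> real \<times> 'x) measure)"
      unfolding sets_Wspace_iff D_def using A01 Ab by (auto intro!: times_borel)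
    have Arho: "A \<in> sets (\<rho> s)" for s using set rho_sets by simp
    have "(\<integral>\<^sup>+w. indicator {w. fst (snd w) < t} w * indicator A (fst w) \<partial>\<nu>) = (\<integral>\<^sup>+w. indicator D w \<partial>\<nu>)"
      by (intro nn_integral_cong) (auto simp: sp_nu D_def indicator_def)
    also have "\<dots> = emeasure \<nu> D"
      using D nu_sets by simp
    also have "\<dots> = (\<integral>\<^sup>+ sx. (\<integral>\<^sup>+ u. indicator D (u, fst sx, snd sx) \<partial>(\<rho> (fst sx))) \<partial>\<Lambda>0)"
      by (rule nu_def[OF D])
    also have "\<dots> = (\<integral>\<^sup>+sx. indicator {0..<t} (fst sx) * (\<integral>\<^sup>+u. indicator A u \<partial>\<rho> (fst sx)) \<partial>\<Lambda>0)"
    proof (intro nn_integral_cong)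
      fix sx :: "real \<times> 'x"
      have "(\<integral>\<^sup>+ u. indicator D (u, fst sx, snd sx) \<partial>(\<rho> (fst sx))) = (\<integral>\<^sup>+ u. indicator {0..<t} (fst sx) * indicator A u \<partial>(\<rho> (fst sx)))"
        by (intro nn_integral_cong) (cases sx, auto simp: D_def indicator_def)
      also have "\<dots> = indicator {0..<t} (fst sx) * (\<integral>\<^sup>+u. indicator A u \<partial>\<rho> (fst sx))"
        using Arho by (simp add: nn_integral_cmult_indicator)
      finally show "(\<integral>\<^sup>+ u. indicator D (u, fst sx, snd sx) \<partial>(\<rho> (fst sx))) = indicator {0..<t} (fst sx) * (\<integral>\<^sup>+u. indicator A u \<partial>\<rho> (fst sx))" .
    qed
    finally have eq: "(\<integral>\<^sup>+w. indicator {w. fst (snd w) < t} w * indicator A (fst w) \<partial>\<nu>) = (\<integral>\<^sup>+sx. indicator {0..<t} (fst sx) * (\<integral>\<^sup>+u. indicator A u \<partial>\<rho> (fst sx)) \<partial>\<Lambda>0)" .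
    have "(\<lambda>s. \<integral>\<^sup>+u. indicator A u \<partial>\<rho> s) = (\<lambda>s. emeasure (\<rho> s) A)"
      using Arho by simp
    then have "(\<lambda>s. \<integral>\<^sup>+u. indicator A u \<partial>\<rho> s) \<in> borel_measurable borel"
      using kernel[OF set] by simp
    then show ?case using eq by simp
  next
    case (mult u c)
    have e1: "(\<integral>\<^sup>+x. c * u x \<partial>\<rho> s) = c * (\<integral>\<^sup>+x. u x \<partial>\<rho> s)" for s
      using mrho[OF mult(2)] by (rule nn_integral_cmult)
    have "(\<integral>\<^sup>+w. indicator {w. fst (snd w) < t} w * (c * u (fst w)) \<partial>\<nu>) = (\<integral>\<^sup>+w. c * (indicator {w. fst (snd w) < t} w * u (fst w)) \<partial>\<nu>)"
      by (simp add: ac_simps)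
    also have "\<dots> = c * (\<integral>\<^sup>+w. indicator {w. fst (snd w) < t} w * u (fst w) \<partial>\<nu>)"
      using mnu[OF mult(2)] by (rule nn_integral_cmult)
    also have "\<dots> = c * (\<integral>\<^sup>+sx. indicator {0..<t} (fst sx) * (\<integral>\<^sup>+x. u x \<partial>\<rho> (fst sx)) \<partial>\<Lambda>0)"
      using mult(4) by simp
    also have "\<dots> = (\<integral>\<^sup>+sx. c * (indicator {0..<t} (fst sx) * (\<integral>\<^sup>+x. u x \<partial>\<rho> (fst sx))) \<partial>\<Lambda>0)"
      using mL[of "\<lambda>s. \<integral>\<^sup>+x. u x \<partial>\<rho> s"] mult(4) by (intro nn_integral_cmult[symmetric]) auto
    also have "\<dots> = (\<integral>\<^sup>+sx. indicator {0..<t} (fst sx) * (\<integral>\<^sup>+x. c * u x \<partial>\<rho> (fst sx)) \<partial>\<Lambda>0)"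
      by (simp add: e1 ac_simps)
    finally show ?case using mult(4) by (auto simp: e1 intro!: borel_measurable_times)
  next
    case (add u v)
    have e1: "(\<integral>\<^sup>+x. v x + u x \<partial>\<rho> s) = (\<integral>\<^sup>+x. v x \<partial>\<rho> s) + (\<integral>\<^sup>+x. u x \<partial>\<rho> s)" for s
      using mrho[OF add.hyps(1)] mrho[OF add.hyps(3)] by (intro nn_integral_add) auto
    have "(\<integral>\<^sup>+w. indicator {w. fst (snd w) < t} w * (v (fst w) + u (fst w)) \<partial>\<nu>)
        = (\<integral>\<^sup>+w. indicator {w. fst (snd w) < t} w * v (fst w) + indicator {w. fst (snd w) < t} w * u (fst w) \<partial>\<nu>)"
      by (simp add: distrib_left)
    also have "\<dots> = (\<integral>\<^sup>+w. indicator {w. fst (snd w) < t} w * v (fst w) \<partial>\<nu>) + (\<integral>\<^sup>+w. indicator {w. fst (snd w) < t} w * u (fst w) \<partial>\<nu>)"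
      using mnu[OF add.hyps(1)] mnu[OF add.hyps(3)] by (intro nn_integral_add) auto
    also have "\<dots> = (\<integral>\<^sup>+sx. indicator {0..<t} (fst sx) * (\<integral>\<^sup>+x. v x \<partial>\<rho> (fst sx)) \<partial>\<Lambda>0) + (\<integral>\<^sup>+sx. indicator {0..<t} (fst sx) * (\<integral>\<^sup>+x. u x \<partial>\<rho> (fst sx)) \<partial>\<Lambda>0)"
      using add.IH(1) add.IH(2) by simp
    also have "\<dots> = (\<integral>\<^sup>+sx. indicator {0..<t} (fst sx) * (\<integral>\<^sup>+x. v x \<partial>\<rho> (fst sx)) + indicator {0..<t} (fst sx) * (\<integral>\<^sup>+x. u x \<partial>\<rho> (fst sx)) \<partial>\<Lambda>0)"
      using mL[of "\<lambda>s. \<integral>\<^sup>+x. u x \<partial>\<rho> s"] mL[of "\<lambda>s. \<integral>\<^sup>+x. v x \<partial>\<rho> s"] add.IH(1) add.IH(2)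
      by (intro nn_integral_add[symmetric]) auto
    also have "\<dots> = (\<integral>\<^sup>+sx. indicator {0..<t} (fst sx) * (\<integral>\<^sup>+x. v x + u x \<partial>\<rho> (fst sx)) \<partial>\<Lambda>0)"
      by (simp add: e1 distrib_left)
    finally show ?case using add.IH(1) add.IH(2) by (auto simp: e1 intro!: borel_measurable_add)
  next
    case (seq U)
    have inc: "U i x \<le> U j x" if "i \<le> j" for i j x using \<open>incseq U\<close> that by (auto simp: incseq_def le_fun_def)
    have e1: "(\<integral>\<^sup>+x. (SUP i. U i) x \<partial>\<rho> s) = (SUP i. \<integral>\<^sup>+x. U i x \<partial>\<rho> s)" for s
      unfolding SUP_apply using mrho[OF seq.hyps(1)] \<open>incseq U\<close>
      by (intro nn_integral_monotone_convergence_SUP) auto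
    have m1: "(\<lambda>s. \<integral>\<^sup>+x. (SUP i. U i) x \<partial>\<rho> s) \<in> borel_measurable borel"
      unfolding e1 using seq.IH by (intro borel_measurable_SUP) auto
    have "(\<integral>\<^sup>+w. indicator {w. fst (snd w) < t} w * (SUP i. U i) (fst w) \<partial>\<nu>)
        = (\<integral>\<^sup>+w. (SUP i. indicator {w. fst (snd w) < t} w * U i (fst w)) \<partial>\<nu>)"
      by (simp add: SUP_mult_left_ennreal image_image)
    also have "\<dots> = (SUP i. \<integral>\<^sup>+w. indicator {w. fst (snd w) < t} w * U i (fst w) \<partial>\<nu>)"
      using mnu[OF seq.hyps(1)]
      by (intro nn_integral_monotone_convergence_SUP) (auto simp: incseq_def le_fun_def intro!: mult_left_mono inc)
    also have "\<dots> = (SUP i. \<integral>\<^sup>+sx. indicator {0..<t} (fst sx) * (\<integral>\<^sup>+x. U i x \<partial>\<rho> (fst sx)) \<partial>\<Lambda>0)"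
      using seq.IH by simp
    also have "\<dots> = (\<integral>\<^sup>+sx. (SUP i. indicator {0..<t} (fst sx) * (\<integral>\<^sup>+x. U i x \<partial>\<rho> (fst sx))) \<partial>\<Lambda>0)"
      using mL[of "\<lambda>s. \<integral>\<^sup>+x. U i x \<partial>\<rho> s" for i] seq.IH
      by (intro nn_integral_monotone_convergence_SUP[symmetric])
         (auto simp: incseq_def le_fun_def intro!: mult_left_mono nn_integral_mono inc)
    also have "\<dots> = (\<integral>\<^sup>+sx. indicator {0..<t} (fst sx) * (\<integral>\<^sup>+x. (SUP i. U i) x \<partial>\<rho> (fst sx)) \<partial>\<Lambda>0)"
      by (simp only: e1 SUP_mult_left_ennreal)
    finally show ?case using m1 by simp
  qed
qed


lemma t_chain:
  fixes t :: "nat \<Rightarrow> real"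
  assumes "\<And>j. 1 \<le> j \<Longrightarrow> j < K \<Longrightarrow> t (Suc j) < t j" "1 \<le> j" "j \<le> K"
  shows "t K \<le> t j"
  using assms
proof (induction K)
  case 0 then show ?case by simp
next
  case (Suc K)
  show ?case
  proof (cases "j = Suc K")
    case False
    then have "j \<le> K" using Suc.prems by simp
    then have "t K \<le> t j" using Suc by auto
    moreover have "t (Suc K) < t K" using Suc.prems \<open>j \<le> K\<close> by auto
    ultimately show ?thesis by simp
  qed simp
qed

lemma telescope:
  fixes x s :: real and t :: "nat \<Rightarrow> real" and m :: "nat \<Rightarrow> nat"
  assumes "\<And>j. 1 \<le> j \<Longrightarrow> j < K \<Longrightarrow> t (Suc j) < t j"
  shows "1 - (\<Prod>j=1..K. if s < t j then x ^ m j else 1)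
       = (\<Sum>j=1..K. if s < t j then (1 - x ^ m j) * x ^ (\<Sum>l=1..j-1. m l) else 0)"
  using assms
proof (induction K)
  case 0 then show ?case by simp
next
  case (Suc K)
  have IH: "1 - (\<Prod>j=1..K. if s < t j then x ^ m j else 1)
       = (\<Sum>j=1..K. if s < t j then (1 - x ^ m j) * x ^ (\<Sum>l=1..j-1. m l) else 0)"
    using Suc by auto
  show ?case
  proof (cases "s < t (Suc K)")
    case True
    have "s < t j" if "j \<in> {1..K}" for j
      using t_chain[of "Suc K" t j] Suc.prems that True by auto
    then have P: "(\<Prod>j=1..K. if s < t j then x ^ m j else 1) = (\<Prod>j=1..K. x ^ m j)"
      by (intro prod.cong) auto
    have "(\<Prod>j=1..K. x ^ m j) = x ^ (\<Sum>l=1..K. m l)" by (simp add: power_sum)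
    then show ?thesis using True IH P
      by (simp add: algebra_simps power_add)
  next
    case False
    then show ?thesis using IH by simp
  qed
qed

lemma exp_neg_neglog1m: "0 \<le> u \<Longrightarrow> u \<le> 1 \<Longrightarrow> exp_neg (neglog1m u) = 1 - u"
  by (cases "u < 1") (auto simp: neglog1m_def exp_neg_def)


theorem lemma5p1:
  fixes F0 :: "(real \<times> 'x::polish_space) measure"
    and \<Lambda>0 :: "(real \<times> 'x) measure"
    and \<rho> :: "real \<Rightarrow> real measure"
    and \<nu> :: "(real \<times> real \<times> 'x) measure"
    and P :: "'o measure"
    and N :: "'o \<Rightarrow> (real \<times> real \<times> 'x) measure"
    and k :: nat and t :: "nat \<Rightarrow> real" and m :: "nat \<Rightarrow> nat" and r :: "nat \<Rightarrow> nat"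
  assumes F0_prob: "prob_space F0" and F0_sets: "sets F0 = sets borel"
    and F0_pos: "emeasure F0 ({..<0} \<times> UNIV) = 0"
    and Lambda0: "\<Lambda>0 = hazard_measure F0"
    and no_atoms: "\<And>s. emeasure \<Lambda>0 ({s} \<times> UNIV) = 0"
    and levy: "\<And>s. levy_measure_01 (\<rho> s)"
    and kernel: "\<And>A. A \<in> sets (restrict_space borel {0..1::real}) \<Longrightarrow>
                    (\<lambda>s. emeasure (\<rho> s) A) \<in> borel_measurable borel"
    and nu_sets: "sets \<nu> = sets (Wspace :: (real \<times> real \<times> 'x) measure)"
    and nu_def: "\<And>A. A \<in> sets (Wspace :: (real \<times> real \<times> 'x) measure) \<Longrightarrow>
        emeasure \<nu> A = (\<integral>\<^sup>+ sx. (\<integral>\<^sup>+ u. indicator A (u, fst sx, snd sx) \<partial>(\<rho> (fst sx))) \<partial>\<Lambda>0)"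
    and PRM: "poisson_random_measure P Wspace \<nu> N"
    and t_dec: "\<And>j. 1 \<le> j \<Longrightarrow> j < k \<Longrightarrow> t (Suc j) < t j"
    and t_pos: "k \<ge> 1 \<Longrightarrow> t k > 0"
    and m_pos: "\<And>j. 1 \<le> j \<Longrightarrow> j \<le> k \<Longrightarrow> m j > 0"
    and r_def: "\<And>j. r j = (\<Sum>l = 1..j. m l)"
  shows "prob_space.expectation P (\<lambda>\<omega>. \<Prod>j = 1..k. surv_minus (N \<omega>) (t j) ^ m j)
           = (\<Prod>j = 1..k. exp_neg (\<integral>\<^sup>+ s. indicator {0..<t j} s * psi \<rho> (m j) (r (j - 1)) s
                                        \<partial>(marginal_s \<Lambda>0)))
       \<and> ((\<forall>j\<in>{1..k}. m j = 1) \<longrightarrow>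
           prob_space.expectation P (\<lambda>\<omega>. \<Prod>j = 1..k. surv_minus (N \<omega>) (t j))
           = (\<Prod>j = 1..k. exp_neg (\<integral>\<^sup>+ s. indicator {0..<t j} s * psi \<rho> 1 (j - 1) s
                                        \<partial>(marginal_s \<Lambda>0))))"
proof -
  interpret prob_space P using PRM by (simp add: poisson_random_measure_def)
  have NS: "\<And>\<omega>. \<omega> \<in> space P \<Longrightarrow> sets (N \<omega>) = sets (Wspace :: (real \<times> real \<times> 'x) measure)"
    using PRM by (simp add: poisson_random_measure_def)
  have rho_sets: "\<And>s. sets (\<rho> s) = sets (restrict_space borel {0..1::real})"
    using levy by (simp add: levy_measure_01_def)
  have L_sets: "sets \<Lambda>0 = sets borel"
    using F0_sets by (simp add: Lambda0 hazard_measure_def)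
  define G where "G j w = indicator {w. fst (snd w) < t j} w * neglog1m (fst w)" for j and w :: "real \<times> real \<times> 'x"
  define g where "g w = (\<Sum>j=1..k. of_nat (m j) * G j w)" for w
  have Gm[measurable]: "G j \<in> borel_measurable (Wspace :: (real \<times> real \<times> 'x) measure)" for j
    unfolding G_def[abs_def] by measurable
  have gm: "g \<in> borel_measurable (Wspace :: (real \<times> real \<times> 'x) measure)"
    unfolding g_def[abs_def] by measurable
  have LHS_eq: "(\<Prod>j = 1..k. surv_minus (N \<omega>) (t j) ^ m j) = exp_neg (\<integral>\<^sup>+w. g w \<partial>N \<omega>)"
    if \<omega>: "\<omega> \<in> space P" for \<omega>
  proof -
    have GN: "G j \<in> borel_measurable (N \<omega>)" for j
      using Gm by (subst measurable_cong_sets[OF NS[OF \<omega>] refl])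
    have "(\<integral>\<^sup>+w. g w \<partial>N \<omega>) = (\<Sum>j=1..k. \<integral>\<^sup>+w. of_nat (m j) * G j w \<partial>N \<omega>)"
      unfolding g_def using GN by (intro nn_integral_sum) auto
    also have "\<dots> = (\<Sum>j=1..k. of_nat (m j) * \<integral>\<^sup>+w. G j w \<partial>N \<omega>)"
      using GN by (intro sum.cong refl nn_integral_cmult) auto
    finally have "exp_neg (\<integral>\<^sup>+w. g w \<partial>N \<omega>) = (\<Prod>j=1..k. exp_neg (\<integral>\<^sup>+w. G j w \<partial>N \<omega>) ^ m j)"
      by (simp add: exp_neg_sum exp_neg_of_nat_mult)
    then show ?thesis by (simp add: surv_minus_def G_def)
  qed
  have E1: "prob_space.expectation P (\<lambda>\<omega>. \<Prod>j = 1..k. surv_minus (N \<omega>) (t j) ^ m j)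
      = exp_neg (\<integral>\<^sup>+w. ennreal (1 - exp_neg (g w)) \<partial>\<nu>)"
  proof -
    have "prob_space.expectation P (\<lambda>\<omega>. \<Prod>j = 1..k. surv_minus (N \<omega>) (t j) ^ m j)
        = (\<integral>\<omega>. exp_neg (\<integral>\<^sup>+w. g w \<partial>N \<omega>) \<partial>P)"
      by (rule Bochner_Integration.integral_cong[OF refl], rule LHS_eq)
    also have "\<dots> = exp_neg (\<integral>\<^sup>+w. ennreal (1 - exp_neg (g w)) \<partial>\<nu>)"
      by (rule laplace_general(2)[OF PRM gm])
    finally show ?thesis .
  qed
  define hh where "hh j u = (1 - (1 - u) ^ m j) * (1 - u) ^ r (j - 1)" for j and u :: real
  have hh0: "0 \<le> hh j u" if "0 \<le> u" "u \<le> 1" for j u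
    using that by (simp add: hh_def power_le_one)
  have pw: "ennreal (1 - exp_neg (g w)) = (\<Sum>j=1..k. indicator {w. fst (snd w) < t j} w * ennreal (hh j (fst w)))"
    if w: "w \<in> space (Wspace :: (real \<times> real \<times> 'x) measure)" for w
  proof -
    have u: "0 \<le> fst w" "fst w \<le> 1" using w by (auto simp: space_Wspace)
    have "exp_neg (g w) = (\<Prod>j=1..k. exp_neg (G j w) ^ m j)"
      by (simp add: g_def exp_neg_sum exp_neg_of_nat_mult)
    also have "\<dots> = (\<Prod>j=1..k. if fst (snd w) < t j then (1 - fst w) ^ m j else 1)"
      using u by (intro prod.cong refl) (auto simp: G_def exp_neg_neglog1m)
    finally have "1 - exp_neg (g w) = (\<Sum>j=1..k. if fst (snd w) < t j then (1 - (1 - fst w) ^ m j) * (1 - fst w) ^ (\<Sum>l=1..j-1. m l) else 0)"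
      using telescope[of k t "fst (snd w)" "1 - fst w" m] t_dec by simp
    also have "\<dots> = (\<Sum>j=1..k. if fst (snd w) < t j then hh j (fst w) else 0)"
      by (intro sum.cong refl) (simp add: hh_def r_def)
    finally have "ennreal (1 - exp_neg (g w)) = (\<Sum>j=1..k. ennreal (if fst (snd w) < t j then hh j (fst w) else 0))"
      using u hh0 by (subst sum_ennreal) auto
    moreover have "\<And>j. ennreal (if fst (snd w) < t j then hh j (fst w) else 0) = indicator {w. fst (snd w) < t j} w * ennreal (hh j (fst w))"
      by (simp add: indicator_def)
    ultimately show ?thesis by simp
  qed
  have nu_sp: "space \<nu> = space (Wspace :: (real \<times> real \<times> 'x) measure)"
    using sets_eq_imp_space_eq[OF nu_sets] .
  have hhm: "(\<lambda>u. ennreal (hh j u)) \<in> borel_measurable (restrict_space borel {0..1::real})" for j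
    unfolding hh_def by (intro measurable_restrict_space1) measurable
  have E2: "(\<integral>\<^sup>+w. ennreal (1 - exp_neg (g w)) \<partial>\<nu>)
      = (\<Sum>j=1..k. \<integral>\<^sup>+w. indicator {w. fst (snd w) < t j} w * ennreal (hh j (fst w)) \<partial>\<nu>)"
  proof -
    have "(\<integral>\<^sup>+w. ennreal (1 - exp_neg (g w)) \<partial>\<nu>)
       = (\<integral>\<^sup>+w. (\<Sum>j=1..k. indicator {w. fst (snd w) < t j} w * ennreal (hh j (fst w))) \<partial>\<nu>)"
      by (intro nn_integral_cong) (simp add: pw nu_sp)
    also have "\<dots> = (\<Sum>j=1..k. \<integral>\<^sup>+w. indicator {w. fst (snd w) < t j} w * ennreal (hh j (fst w)) \<partial>\<nu>)"
    proof (rule nn_integral_sum)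
      fix j
      have [measurable]: "(\<lambda>w. ennreal (hh j (fst w))) \<in> borel_measurable (Wspace :: (real \<times> real \<times> 'x) measure)"
        using measurable_compose[OF fst_Wspace hhm[of j]] by simp
      have "(\<lambda>w. indicator {w. fst (snd w) < t j} w * ennreal (hh j (fst w))) \<in> borel_measurable (Wspace :: (real \<times> real \<times> 'x) measure)"
        by measurable
      then show "(\<lambda>w. indicator {w. fst (snd w) < t j} w * ennreal (hh j (fst w))) \<in> borel_measurable \<nu>"
        by (subst measurable_cong_sets[OF nu_sets refl])
    qed
    finally show ?thesis .
  qed
  have fstL: "fst \<in> measurable \<Lambda>0 borel"
    by (subst measurable_cong_sets[OF L_sets refl]) simp
  have E3: "(\<integral>\<^sup>+w. indicator {w. fst (snd w) < t j} w * ennreal (hh j (fst w)) \<partial>\<nu>)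
      = (\<integral>\<^sup>+ s. indicator {0..<t j} s * psi \<rho> (m j) (r (j - 1)) s \<partial>(marginal_s \<Lambda>0))" for j
  proof -
    have psieq: "psi \<rho> (m j) (r (j - 1)) = (\<lambda>s. \<integral>\<^sup>+u. ennreal (hh j u) \<partial>\<rho> s)"
      by (simp add: psi_def hh_def fun_eq_iff)
    note nf = nu_fun[OF rho_sets kernel L_sets nu_sets nu_def hhm[of j], of "t j"]
    have pm[measurable]: "psi \<rho> (m j) (r (j - 1)) \<in> borel_measurable borel"
      using nf psieq by simp
    have "(\<integral>\<^sup>+ s. indicator {0..<t j} s * psi \<rho> (m j) (r (j - 1)) s \<partial>(marginal_s \<Lambda>0))
        = (\<integral>\<^sup>+ sx. indicator {0..<t j} (fst sx) * psi \<rho> (m j) (r (j - 1)) (fst sx) \<partial>\<Lambda>0)"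
      unfolding marginal_s_def by (rule nn_integral_distr[OF fstL]) (use pm in measurable)
    then show ?thesis using nf psieq by simp
  qed
  have main: "prob_space.expectation P (\<lambda>\<omega>. \<Prod>j = 1..k. surv_minus (N \<omega>) (t j) ^ m j)
           = (\<Prod>j = 1..k. exp_neg (\<integral>\<^sup>+ s. indicator {0..<t j} s * psi \<rho> (m j) (r (j - 1)) s
                                        \<partial>(marginal_s \<Lambda>0)))"
    unfolding E1 E2 E3 by (simp add: exp_neg_sum)
  show ?thesis
  proof (intro conjI impI)
    show "prob_space.expectation P (\<lambda>\<omega>. \<Prod>j = 1..k. surv_minus (N \<omega>) (t j) ^ m j)
           = (\<Prod>j = 1..k. exp_neg (\<integral>\<^sup>+ s. indicator {0..<t j} s * psi \<rho> (m j) (r (j - 1)) s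
                                        \<partial>(marginal_s \<Lambda>0)))" by (rule main)
    assume m1: "\<forall>j\<in>{1..k}. m j = 1"
    have r1: "r (j - 1) = j - 1" if "j \<in> {1..k}" for j
    proof -
      have "r (j - 1) = (\<Sum>l=1..j-1. (1::nat))"
        unfolding r_def using m1 that by (intro sum.cong) auto
      then show ?thesis by simp
    qed
    have "prob_space.expectation P (\<lambda>\<omega>. \<Prod>j = 1..k. surv_minus (N \<omega>) (t j))
        = prob_space.expectation P (\<lambda>\<omega>. \<Prod>j = 1..k. surv_minus (N \<omega>) (t j) ^ m j)"
      using m1 by (intro Bochner_Integration.integral_cong refl prod.cong) auto
    also have "\<dots> = (\<Prod>j = 1..k. exp_neg (\<integral>\<^sup>+ s. indicator {0..<t j} s * psi \<rho> (m j) (r (j - 1)) s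
                                        \<partial>(marginal_s \<Lambda>0)))" by (rule main)
    also have "\<dots> = (\<Prod>j = 1..k. exp_neg (\<integral>\<^sup>+ s. indicator {0..<t j} s * psi \<rho> 1 (j - 1) s
                                        \<partial>(marginal_s \<Lambda>0)))"
      using m1 r1 by (intro prod.cong refl) auto
    finally show "prob_space.expectation P (\<lambda>\<omega>. \<Prod>j = 1..k. surv_minus (N \<omega>) (t j))
           = (\<Prod>j = 1..k. exp_neg (\<integral>\<^sup>+ s. indicator {0..<t j} s * psi \<rho> 1 (j - 1) s
                                        \<partial>(marginal_s \<Lambda>0)))" .
  qed
qed

end
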